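(* Let $S$ be a non-empty poset and $(\mathcal{L},\rightharpoonup)=(L,\wedge,\vee,0,1)$ a complete lattice with an $S$-action. If $\mathcal{L}$ is multiplication, then $\mathcal{L}$ is $Spec^p(\mathcal{L})$-top; that is, with $X=Spec^p(\mathcal{L})$ and $V(a)=\{p\in X: a\leq p\}$ for $a\in L$, the family $\{V(a): a\in L\}$ is closed under finite unions.
   Context: An $S$-action on a lattice $(L,\wedge,\vee)$ is a map $\rightharpoonup:S\times L\to L$ such that $s_1\leq s_2\Rightarrow s_1\rightharpoonup x\leq s_2\rightharpoonup x$; $x\leq y\Rightarrow s\rightharpoonup x\leq s\rightharpoonup y$; and $s\rightharpoonup x\leq x$. The bounded lattice with $S$-action is multiplication iff every $x\in L$ equals $s\rightharpoonup 1$ for some $s\in S$. An element $x\in L\setminus\{1\}$ is prime iff for all $y\in L$ and $s\in S$: $s\rightharpoonup y\leq x$ implies $s\rightharpoonup 1\leq x$ or $y\leq x$; $Spec^p(\mathcal{L})$ is the set of prime elements. *)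

theory Defs
  imports Main
begin

definition S_action :: "('s::order \<Rightarrow> 'a::lattice \<Rightarrow> 'a) \<Rightarrow> bool" where
  "S_action act \<longleftrightarrow>
     (\<forall>s1 s2 x. s1 \<le> s2 \<longrightarrow> act s1 x \<le> act s2 x) \<and>
     (\<forall>s x y. x \<le> y \<longrightarrow> act s x \<le> act s y) \<and>
     (\<forall>s x. act s x \<le> x)"

definition multiplication :: "('s::order \<Rightarrow> 'a::bounded_lattice \<Rightarrow> 'a) \<Rightarrow> bool" where
  "multiplication act \<longleftrightarrow> (\<forall>x. \<exists>s. x = act s top)"

definition prime_el :: "('s::order \<Rightarrow> 'a::bounded_lattice \<Rightarrow> 'a) \<Rightarrow> 'a \<Rightarrow> bool" where
  "prime_el act x \<longleftrightarrow> x \<noteq> top \<and>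
     (\<forall>y s. act s y \<le> x \<longrightarrow> act s top \<le> x \<or> y \<le> x)"

definition Spec_p :: "('s::order \<Rightarrow> 'a::bounded_lattice \<Rightarrow> 'a) \<Rightarrow> 'a set" where
  "Spec_p act = {x. prime_el act x}"

definition V :: "('s::order \<Rightarrow> 'a::bounded_lattice \<Rightarrow> 'a) \<Rightarrow> 'a \<Rightarrow> 'a set" where
  "V act a = {p \<in> Spec_p act. a \<le> p}"

end

theory Submission
  imports Defs
begin

lemma V_union:
  fixes act :: "'s::order \<Rightarrow> 'a::complete_lattice \<Rightarrow> 'a"
  assumes A: "S_action act" and M: "multiplication act"
  shows "V act a \<union> V act b = V act (inf a b)"
proof
  show "V act a \<union> V act b \<subseteq> V act (inf a b)"
    unfolding V_def by (auto intro: le_infI1 le_infI2)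
next
  show "V act (inf a b) \<subseteq> V act a \<union> V act b"
  proof
    fix p assume "p \<in> V act (inf a b)"
    hence P: "prime_el act p" and le: "inf a b \<le> p" unfolding V_def Spec_p_def by auto
    obtain s where s: "a = act s top" using M unfolding multiplication_def by blast
    have "act s b \<le> act s top" using A unfolding S_action_def by auto
    moreover have "act s b \<le> b" using A unfolding S_action_def by auto
    ultimately have "act s b \<le> inf a b" using s by auto
    hence "act s b \<le> p" using le by (rule order_trans)
    hence "act s top \<le> p \<or> b \<le> p" using P unfolding prime_el_def by blast
    thus "p \<in> V act a \<union> V act b" using P s unfolding V_def Spec_p_def by auto
  qed
qed

theorem mainTheorem9:
  fixes act :: "'s::order \<Rightarrow> 'a::complete_lattice \<Rightarrow> 'a"
  assumes "S_action act"
    and "multiplication act"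
  shows "\<forall>F. finite F \<longrightarrow> (\<exists>c. (\<Union>a\<in>F. V act a) = V act c)"
proof (intro allI impI)
  fix F :: "'a set" assume "finite F"
  thus "\<exists>c. (\<Union>a\<in>F. V act a) = V act c"
  proof (induction F rule: finite_induct)
    case empty
    have "V act top = {}" unfolding V_def Spec_p_def prime_el_def
      by (auto simp: top_unique)
    thus ?case by auto
  next
    case (insert x F)
    then obtain c where "(\<Union>a\<in>F. V act a) = V act c" by blast
    hence "(\<Union>a\<in>insert x F. V act a) = V act (inf x c)"
      using V_union[OF assms, of x c] by auto
    thus ?case by blast
  qed
qed

end
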